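(* Let $A$ be an $n\times n$ nonsingular real matrix, $\hat\tau>0$, $\tau=\hat\tau\|A\|_2$, and let $\widetilde A=A+M_UM_\Sigma M_V^T$ where $M_U,M_V\in\mathbb{R}^{n\times m}$ have orthonormal columns and $M_\Sigma$ is $m\times m$ diagonal with entries in $(0,\tau]$. Let $F=M_\Sigma^{1/2}M_V^TA^{-1}M_UM_\Sigma^{1/2}$ and assume $F^HF+F+F^H$ is positive semidefinite (this holds in particular if $M_V^TA^{-1}M_U$ has positive semidefinite Hermitian part). Then $\widetilde A$ is nonsingular and $$\|\widetilde A^{-1}\|_2\le(1+\hat\tau\kappa_2(A))\|A^{-1}\|_2.$$
   Context: $\|\cdot\|_2$ is the spectral norm, $\kappa_2(A)=\|A\|_2\|A^{-1}\|_2$, $F^H$ is the conjugate transpose of $F$, and the Hermitian part of a matrix $X$ is $(X+X^H)/2$. *)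

theory Defs
  imports "HOL-Analysis.Analysis"
begin

definition spec_norm :: "real^'n^'m \<Rightarrow> real" where
  "spec_norm A = onorm (\<lambda>x. A *v x)"

definition psd :: "real^'n^'n \<Rightarrow> bool" where
  "psd G \<longleftrightarrow> transpose G = G \<and> (\<forall>x. 0 \<le> x \<bullet> (G *v x))"

definition diagonal_mat :: "real^'m^'m \<Rightarrow> bool" where
  "diagonal_mat D \<longleftrightarrow> (\<forall>i j. i \<noteq> j \<longrightarrow> D $ i $ j = 0)"

definition diag_sqrt :: "real^'m^'m \<Rightarrow> real^'m^'m" where
  "diag_sqrt D = (\<chi> i j. if i = j then sqrt (D $ i $ i) else 0)"

end

theory Submission
  imports Defs
begin

lemma iso_norm:
  fixes U :: "real^'m^'n"
  assumes "transpose U ** U = mat 1"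
  shows "norm (U *v v) = norm v"
proof -
  have "inner (U *v v) (U *v v) = inner ((U *v v) v* U) v"
    by (simp add: dot_lmul_matrix)
  also have "(U *v v) v* U = v"
    by (metis assms matrix_vector_mul_assoc matrix_vector_mul_lid transpose_matrix_vector)
  finally have "inner (U *v v) (U *v v) = inner v v" .
  then show ?thesis by (simp add: norm_eq_sqrt_inner)
qed

lemma transp_norm_le:
  fixes V :: "real^'m^'n"
  assumes "transpose V ** V = mat 1"
  shows "norm (transpose V *v x) \<le> norm x"
proof -
  define w where "w = transpose V *v x"
  have "norm w ^ 2 = inner w w" by (simp add: power2_norm_eq_inner)
  also have "\<dots> = inner (x v* V) w" by (simp add: w_def)
  also have "\<dots> = inner x (V *v w)" by (simp add: dot_lmul_matrix)
  also have "\<dots> \<le> norm x * norm (V *v w)" by (rule norm_cauchy_schwarz)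
  also have "\<dots> = norm x * norm w" using iso_norm[OF assms] by simp
  finally have "norm w * norm w \<le> norm x * norm w" by (simp add: power2_eq_square)
  then show ?thesis unfolding w_def[symmetric]
    by (cases "norm w = 0") (auto simp: mult_le_cancel_right)
qed

lemma diag_sqrt_mv:
  fixes MS :: "real^'m^'m"
  shows "diag_sqrt MS *v v = (\<chi> i. sqrt (MS $ i $ i) * v $ i)"
  proof -
  have "(\<Sum>j\<in>UNIV. (if i = j then sqrt (MS $ i $ i) else 0) * v $ j) = sqrt (MS $ i $ i) * v $ i" for i
    by (simp add: if_distrib[of "\<lambda>t. t * _"] cong: if_cong)
  then show ?thesis by (simp add: diag_sqrt_def matrix_vector_mult_def vec_eq_iff)
qed

lemma diag_sqrt_sq:
  fixes MS :: "real^'m^'m"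
  assumes "diagonal_mat MS" "\<forall>i. 0 < MS $ i $ i"
  shows "diag_sqrt MS *v (diag_sqrt MS *v v) = MS *v v"
proof -
  have "(MS *v v) $ i = MS $ i $ i * v $ i" for i
  proof -
    have "(MS *v v) $ i = (\<Sum>j\<in>UNIV. MS $ i $ j * v $ j)" by (simp add: matrix_vector_mult_def)
    also have "\<dots> = (\<Sum>j\<in>UNIV. if j = i then MS $ i $ i * v $ i else 0)"
      using assms(1) unfolding diagonal_mat_def by (intro sum.cong) auto
    finally show ?thesis by simp
  qed
  moreover have "sqrt (MS $ i $ i) * sqrt (MS $ i $ i) = MS $ i $ i" for i
    using assms(2)[rule_format, of i] by simp
  ultimately show ?thesis by (simp add: diag_sqrt_mv vec_eq_iff mult.assoc[symmetric])
qed

lemma diag_sqrt_norm: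
  fixes MS :: "real^'m^'m"
  assumes "\<forall>i. 0 < MS $ i $ i \<and> MS $ i $ i \<le> tau"
  shows "norm (diag_sqrt MS *v v) \<le> sqrt tau * norm v"
proof -
  obtain i where "0 < MS $ i $ i \<and> MS $ i $ i \<le> tau" using assms by blast
  then have t0: "0 \<le> tau" by linarith
  have "norm (diag_sqrt MS *v v) ^ 2 = (\<Sum>i\<in>UNIV. MS $ i $ i * (v $ i)^2)"
    unfolding power2_norm_eq_inner
    using assms by (simp add: diag_sqrt_mv inner_vec_def power2_eq_square
        mult.commute mult.left_commute less_imp_le)
  also have "\<dots> \<le> (\<Sum>i\<in>UNIV. tau * (v $ i)^2)"
    using assms by (intro sum_mono mult_right_mono) auto
  also have "\<dots> = (sqrt tau * norm v) ^ 2"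
  proof -
    obtain i where "0 < MS $ i $ i \<and> MS $ i $ i \<le> tau" using assms by blast
    then have "0 \<le> tau" by linarith
    then have "(sqrt tau * norm v) ^ 2 = tau * inner v v"
      by (simp add: power_mult_distrib power2_norm_eq_inner)
    then show ?thesis by (simp add: inner_vec_def sum_distrib_left power2_eq_square)
  qed
  finally show ?thesis
    by (rule power2_le_imp_le) (use t0 in \<open>auto\<close>)
qed

lemma psd_bound:
  fixes F :: "real^'m^'m"
  assumes "psd (transpose F ** F + F + transpose F)"
  shows "norm z \<le> norm (z + F *v z)"
proof -
  have tr: "inner a (b v* F) = inner (F *v a) b" for a b
    by (metis dot_lmul_matrix inner_commute)
  have "0 \<le> inner z ((transpose F ** F + F + transpose F) *v z)"
    using assms unfolding psd_def by blast
  also have "\<dots> = inner (F *v z) (F *v z) + inner z (F *v z) + inner (F *v z) z"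
    by (simp add: matrix_vector_mult_add_rdistrib inner_add_right tr
        matrix_vector_mul_assoc[symmetric])
  finally have "inner z z \<le> inner (z + F *v z) (z + F *v z)"
    by (simp add: inner_add_left inner_add_right inner_commute)
  then have "norm z ^ 2 \<le> norm (z + F *v z) ^ 2" by (simp add: power2_norm_eq_inner)
  then show ?thesis by (rule power2_le_imp_le) simp
qed

lemma matrix_inv_props:
  fixes A :: "real^'n^'n"
  assumes "invertible A"
  shows "A ** matrix_inv A = mat 1 \<and> matrix_inv A ** A = mat 1"
  using assms unfolding invertible_def matrix_inv_def by (rule someI_ex)

theorem mainTheorem14:
  fixes A :: "real^'n^'n" and MU MV :: "real^'m^'n" and MS F :: "real^'m^'m"
    and tauh tau :: real
  assumes "invertible A"
    and "tauh > 0"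
    and "tau = tauh * spec_norm A"
    and "transpose MU ** MU = mat 1"
    and "transpose MV ** MV = mat 1"
    and "diagonal_mat MS"
    and "\<forall>i. 0 < MS $ i $ i \<and> MS $ i $ i \<le> tau"
    and "F = diag_sqrt MS ** transpose MV ** matrix_inv A ** MU ** diag_sqrt MS"
    and "psd (transpose F ** F + F + transpose F)"
  shows "invertible (A + MU ** MS ** transpose MV) \<and>
         spec_norm (matrix_inv (A + MU ** MS ** transpose MV))
           \<le> (1 + tauh * (spec_norm A * spec_norm (matrix_inv A))) * spec_norm (matrix_inv A)"
proof -
  define Ai where "Ai = matrix_inv A"
  define D where "D = diag_sqrt MS"
  define B where "B = A + MU ** MS ** transpose MV"
  define a where "a = spec_norm Ai"
  define c where "c = (1 + tau * a) * a"
  have AiA: "Ai ** A = mat 1" using matrix_inv_props[OF assms(1)] by (simp add: Ai_def)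
  have Ainorm: "norm (Ai *v y) \<le> a * norm y" for y
    unfolding a_def spec_norm_def by (rule onorm) simp
  have a0: "0 \<le> a" unfolding a_def spec_norm_def by (rule onorm_pos_le) simp
  obtain i0 where "0 < MS $ i0 $ i0 \<and> MS $ i0 $ i0 \<le> tau" using assms(7) by blast
  then have tau0: "0 \<le> tau" by linarith
  have Dn: "norm (D *v v) \<le> sqrt tau * norm v" for v
    unfolding D_def by (rule diag_sqrt_norm[OF assms(7)])
  have key: "norm x \<le> c * norm (B *v x)" for x
  proof -
    define y where "y = B *v x"
    define z where "z = D *v (transpose MV *v x)"
    define w where "w = D *v (transpose MV *v (Ai *v y))"
    have By: "y = A *v x + MU *v (D *v z)"
      using diag_sqrt_sq[OF assms(6)] assms(7)
      by (simp add: y_def B_def z_def D_def matrix_vector_mult_add_rdistrib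
          matrix_vector_mul_assoc[symmetric])
    have xe: "x = Ai *v y - Ai *v (MU *v (D *v z))"
      by (simp add: By matrix_vector_right_distrib matrix_vector_mul_assoc AiA)
    have Fz: "F *v z = D *v (transpose MV *v (Ai *v (MU *v (D *v z))))"
      by (simp add: assms(8) D_def Ai_def matrix_vector_mul_assoc matrix_mul_assoc)
    have "transpose MV *v x = transpose MV *v (Ai *v y) - transpose MV *v (Ai *v (MU *v (D *v z)))"
      by (subst xe) (simp add: matrix_vector_mult_diff_distrib)
    then have "z = D *v (transpose MV *v (Ai *v y) - transpose MV *v (Ai *v (MU *v (D *v z))))"
      unfolding z_def by (simp only:)
    then have "z = w - F *v z"
      by (simp only: Fz w_def matrix_vector_mult_diff_distrib)
    then have zw: "z + F *v z = w" by (simp add: algebra_simps)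
    have "norm z \<le> norm w" using psd_bound[OF assms(9)] zw by metis
    also have "\<dots> \<le> sqrt tau * norm (transpose MV *v (Ai *v y))" unfolding w_def by (rule Dn)
    also have "\<dots> \<le> sqrt tau * (a * norm y)"
      by (intro mult_left_mono order_trans[OF transp_norm_le[OF assms(5)] Ainorm]) (simp add: tau0)
    finally have zn: "norm z \<le> sqrt tau * (a * norm y)" .
    have "norm x \<le> norm (Ai *v y) + norm (Ai *v (MU *v (D *v z)))"
      using xe by (metis norm_triangle_ineq4)
    also have "\<dots> \<le> a * norm y + a * norm (MU *v (D *v z))"
      by (intro add_mono Ainorm)
    also have "norm (MU *v (D *v z)) = norm (D *v z)" by (rule iso_norm[OF assms(4)])
    also have "a * norm y + a * norm (D *v z) \<le> a * norm y + a * (sqrt tau * (sqrt tau * (a * norm y)))"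
      using a0 Dn[of z] zn tau0 by (intro add_left_mono mult_left_mono order_trans[OF Dn]) auto
    also have "\<dots> = c * norm y" using tau0 by (simp add: c_def algebra_simps)
    finally show ?thesis by (simp add: y_def)
  qed
  have "inj ((*v) B)"
  proof (rule injI)
    fix x1 x2 assume "B *v x1 = B *v x2"
    then have "B *v (x1 - x2) = 0" by (simp add: matrix_vector_mult_diff_distrib)
    then have "norm (x1 - x2) \<le> 0" using key[of "x1 - x2"] by simp
    then show "x1 = x2" by simp
  qed
  then have invB: "invertible B"
    using matrix_left_invertible_injective invertible_left_inverse by blast
  have BBi: "B ** matrix_inv B = mat 1" using matrix_inv_props[OF invB] by simp
  have "spec_norm (matrix_inv B) \<le> c"
    unfolding spec_norm_def
  proof (rule onorm_le)
    fix y
    have "B *v (matrix_inv B *v y) = y" by (simp add: matrix_vector_mul_assoc BBi)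
    then show "norm (matrix_inv B *v y) \<le> c * norm y" using key[of "matrix_inv B *v y"] by simp
  qed
  then show ?thesis using invB
    by (simp add: B_def c_def a_def Ai_def assms(3) algebra_simps)
qed

end
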